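(* Let $\mathcal{A}=(\mathcal{H},|s_0\rangle,\Sigma,\{U_\sigma\}_{\sigma\in\Sigma},F)$ be a quantum automaton. For any nonempty finite word $w\in\Sigma^+$ and any $\varepsilon>0$, there is a positive integer $k$ such that $$\bigl|f^{\mathrm{ND}}_{\mathcal{A}}(uv)-f^{\mathrm{ND}}_{\mathcal{A}}(uw^kv)\bigr|\le\varepsilon$$ for all finite words $u\in\Sigma^*$ and all infinite words $v\in\Sigma^\omega$. Moreover, if $\mathcal{H}$ is $n$-dimensional, there is a constant $c$ such that such a $k$ can be chosen with $k\le (c\varepsilon)^{-n}$.
   Context: A quantum automaton is a tuple $\mathcal{A}=(\mathcal{H},|s_0\rangle,\Sigma,\{U_\sigma:\sigma\in\Sigma\},F)$ where $\mathcal{H}$ is a finite-dimensional complex Hilbert space, $|s_0\rangle\in\mathcal{H}$ is a unit vector (initial state), $\Sigma$ is a finite alphabet, each $U_\sigma$ is a unitary operator on $\mathcal{H}$, and $F$ is a subspace of $\mathcal{H}$ (accepting space). For a finite word $x=\sigma_1\cdots\sigma_m$ put $U_x=U_{\sigma_m}\cdots U_{\sigma_1}$ ($U_\epsilon=I$). For an infinite word $w=\sigma_1\sigma_2\cdots\in\Sigma^\omega$, let $w_n$ denote its prefix of length $n$; the non-disturbing run of $\mathcal{A}$ over $w$ is $|s_n\rangle=U_{w_n}|s_0\rangle$, $n\ge0$. The non-disturbing Büchi acceptance probability is $$f^{\mathrm{ND}}_{\mathcal{A}}(w)=\sup_{|\psi\rangle\in F,\ \||\psi\rangle\|=1}\ \sup_{\{n_i\}}\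 \inf_{i\ge1}|\langle\psi|s_{n_i}\rangle|^2,$$ where $\{n_i\}$ ranges over all strictly increasing sequences $0\le n_1<n_2<\cdots$ of natural numbers. $w^k$ denotes the $k$-fold concatenation of $w$. *)

theory Defs
  imports "HOL-Analysis.Analysis"
begin

text \<open>Hilbert space: complex^'n (finite index type 'n, dimension CARD('n)).
  Operators: matrices complex^'n^'n acting by *v.\<close>

definition adj_mat :: "complex^'n^'n \<Rightarrow> complex^'n^'n" where
  "adj_mat A = (\<chi> i j. cnj (A $ j $ i))"

definition unitary_mat :: "complex^'n^'n \<Rightarrow> bool" where
  "unitary_mat A \<longleftrightarrow> adj_mat A ** A = mat 1 \<and> A ** adj_mat A = mat 1"

text \<open>complex-linear subspace\<close>
definition complex_subspace :: "(complex^'n) set \<Rightarrow> bool" where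
  "complex_subspace F \<longleftrightarrow> 0 \<in> F \<and> (\<forall>x\<in>F. \<forall>y\<in>F. x + y \<in> F)
     \<and> (\<forall>c::complex. \<forall>x\<in>F. c *s x \<in> F)"

text \<open>Hermitian inner product, conjugate-linear in the first argument: <psi|s>\<close>
definition braket :: "complex^'n \<Rightarrow> complex^'n \<Rightarrow> complex" where
  "braket psi s = (\<Sum>i\<in>UNIV. cnj (psi $ i) * s $ i)"

definition is_QA :: "complex^'n \<Rightarrow> ('a::finite \<Rightarrow> complex^'n^'n) \<Rightarrow> (complex^'n) set \<Rightarrow> bool" where
  "is_QA s0 U F \<longleftrightarrow> norm s0 = 1 \<and> (\<forall>\<sigma>. unitary_mat (U \<sigma>)) \<and> complex_subspace F"

text \<open>Non-disturbing run over an infinite word w: s_0 = s0, s_(n+1) = U_(w n) s_n\<close>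
fun qrun :: "('a \<Rightarrow> complex^'n^'n) \<Rightarrow> complex^'n \<Rightarrow> (nat \<Rightarrow> 'a) \<Rightarrow> nat \<Rightarrow> complex^'n" where
  "qrun U s0 w 0 = s0"
| "qrun U s0 w (Suc n) = U (w n) *v qrun U s0 w n"

text \<open>Non-disturbing Buechi acceptance probability. The supremum is taken with 0 adjoined
  (all values are >= 0, so this only fixes the convention sup of empty set = 0 when F = {0}).\<close>
definition fND :: "('a \<Rightarrow> complex^'n^'n) \<Rightarrow> complex^'n \<Rightarrow> (complex^'n) set \<Rightarrow> (nat \<Rightarrow> 'a) \<Rightarrow> real" where
  "fND U s0 F w = Sup (insert 0
     {Inf (range (\<lambda>i::nat. (cmod (braket psi (qrun U s0 w (r i))))\<^sup>2)) | psi r.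
        psi \<in> F \<and> norm psi = 1 \<and> strict_mono r})"

text \<open>Concatenation of a finite word and an infinite word\<close>
definition conc_word :: "'a list \<Rightarrow> (nat \<Rightarrow> 'a) \<Rightarrow> nat \<Rightarrow> 'a" where
  "conc_word u v = (\<lambda>i. if i < length u then u ! i else v (i - length u))"

text \<open>k-fold concatenation of a finite word\<close>
definition word_pow :: "'a list \<Rightarrow> nat \<Rightarrow> 'a list" where
  "word_pow w k = concat (replicate k w)"

end

theory Submission
  imports Defs "HOL-Complex_Analysis.Cauchy_Integral_Formula"
begin


type_synonym 'n cvec = "complex^'n"

lemma braket_add_right: "braket a (b + c) = braket a b + braket a c"
  unfolding braket_def by (simp add: distrib_left sum.distrib)
lemma braket_diff_right: "braket a (b - c) = braket a b - braket a c"
  unfolding braket_def by (simp add: right_diff_distrib sum_subtractf)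
lemma braket_scale_right: "braket a (c *s b) = c * braket a b"
  unfolding braket_def by (simp add: sum_distrib_left algebra_simps)
lemma braket_add_left: "braket (a + b) c = braket a c + braket b c"
  unfolding braket_def by (simp add: distrib_right sum.distrib)
lemma braket_diff_left: "braket (a - b) c = braket a c - braket b c"
  unfolding braket_def by (simp add: left_diff_distrib sum_subtractf)
lemma braket_scale_left: "braket (c *s a) b = cnj c * braket a b"
  unfolding braket_def by (simp add: sum_distrib_left algebra_simps)
lemma braket_zero_right[simp]: "braket a 0 = 0"
  unfolding braket_def by simp
lemma braket_zero_left[simp]: "braket 0 a = 0"
  unfolding braket_def by simp
lemma braket_cnj: "cnj (braket a b) = braket b a"
  unfolding braket_def by (simp add: mult.commute)
lemma braket_sum_right: "braket a (\<Sum>i\<in>I. f i) = (\<Sum>i\<in>I. braket a (f i))"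
  by (induction I rule: infinite_finite_induct) (auto simp: braket_add_right)
lemma braket_sum_left: "braket (\<Sum>i\<in>I. f i) a = (\<Sum>i\<in>I. braket (f i) a)"
  by (induction I rule: infinite_finite_induct) (auto simp: braket_add_left)

lemma norm_sq_vec: "(norm (x::complex^'n))\<^sup>2 = (\<Sum>i\<in>UNIV. (cmod (x$i))\<^sup>2)"
  unfolding norm_vec_def L2_set_def by (simp add: sum_nonneg)

lemma cnj_mult_self: "cnj z * z = of_real ((cmod z)\<^sup>2)"
  using complex_norm_square[of z] by (simp only: mult.commute)

lemma braket_self: "braket x x = of_real ((norm x)\<^sup>2)"
  unfolding norm_sq_vec braket_def of_real_sum cnj_mult_self ..

lemma braket_Cauchy: "cmod (braket a b) \<le> norm a * norm b"
proof -
  have "cmod (braket a b) \<le> (\<Sum>i\<in>UNIV. cmod (cnj (a$i) * b$i))"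
    unfolding braket_def by (rule norm_sum)
  also have "\<dots> = (\<Sum>i\<in>UNIV. \<bar>cmod (a$i)\<bar> * \<bar>cmod (b$i)\<bar>)" by (simp add: norm_mult)
  also have "\<dots> \<le> L2_set (\<lambda>i. cmod (a$i)) UNIV * L2_set (\<lambda>i. cmod (b$i)) UNIV"
    by (rule L2_set_mult_ineq)
  finally show ?thesis unfolding norm_vec_def .
qed

lemma braket_adj: "braket (A *v x) y = braket x (adj_mat A *v y)"
  unfolding braket_def adj_mat_def matrix_vector_mult_def
  by (simp add: sum_distrib_left sum_distrib_right algebra_simps cnj_sum) (rule sum.swap)

lemma adj_mult: "adj_mat (A ** B) = adj_mat B ** adj_mat A"
  unfolding adj_mat_def matrix_matrix_mult_def
  by (simp add: vec_eq_iff cnj_sum mult.commute)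

definition lunit :: "complex^'n^'n \<Rightarrow> bool" where
  "lunit A \<longleftrightarrow> adj_mat A ** A = mat 1"

lemma lunit_mult: "lunit A \<Longrightarrow> lunit B \<Longrightarrow> lunit (A ** B)"
proof -
  assume a: "lunit A" "lunit B"
  have "adj_mat (A ** B) ** (A ** B) = adj_mat B ** ((adj_mat A ** A) ** B)"
    by (simp add: adj_mult matrix_mul_assoc)
  then show ?thesis using a unfolding lunit_def by (simp add: matrix_mul_lid)
qed

lemma adj_one: "adj_mat (mat 1) = mat 1"
  unfolding adj_mat_def by (simp add: vec_eq_iff mat_def)

lemma lunit_one: "lunit (mat 1)"
  unfolding lunit_def adj_one by (simp add: matrix_mul_rid)

lemma lunit_braket: "lunit A \<Longrightarrow> braket (A *v x) (A *v y) = braket x y"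
  unfolding lunit_def braket_adj by (simp add: matrix_vector_mul_assoc)

lemma lunit_norm: "lunit A \<Longrightarrow> norm (A *v x) = norm x"
proof -
  assume a: "lunit A"
  have "of_real ((norm (A *v x))\<^sup>2) = (of_real ((norm x)\<^sup>2) :: complex)"
    using lunit_braket[OF a, of x x] by (simp only: braket_self)
  then have "(norm (A *v x))\<^sup>2 = (norm x)\<^sup>2" using of_real_eq_iff by blast
  then show ?thesis by (simp add: power2_eq_iff_nonneg)
qed


definition mpow :: "complex^'n^'n \<Rightarrow> nat \<Rightarrow> complex^'n \<Rightarrow> complex^'n" where
  "mpow M i = ((\<lambda>y. M *v y) ^^ i)"

lemma mpow_0[simp]: "mpow M 0 x = x" by (simp add: mpow_def)
lemma mpow_Suc: "mpow M (Suc i) x = M *v mpow M i x" by (simp add: mpow_def)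

lemma mpow_in: "vec.subspace S \<Longrightarrow> (\<forall>y\<in>S. M *v y \<in> S) \<Longrightarrow> x \<in> S \<Longrightarrow> mpow M i x \<in> S"
  by (induction i) (auto simp: mpow_Suc)

definition pev :: "complex^'n^'n \<Rightarrow> complex poly \<Rightarrow> complex^'n \<Rightarrow> complex^'n" where
  "pev M p x = (\<Sum>i\<le>degree p. coeff p i *s mpow M i x)"

lemma pev_bound: "degree p \<le> n \<Longrightarrow> pev M p x = (\<Sum>i\<le>n. coeff p i *s mpow M i x)"
  unfolding pev_def
  by (rule sum.mono_neutral_left) (auto simp: coeff_eq_0)

lemma pev_add: "pev M (p + q) x = pev M p x + pev M q x"
proof -
  define n where "n = max (degree p) (degree q)"
  have "degree (p + q) \<le> n" unfolding n_def by (rule degree_add_le_max)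
  then have "pev M (p + q) x = (\<Sum>i\<le>n. coeff (p + q) i *s mpow M i x)" by (rule pev_bound)
  also have "\<dots> = (\<Sum>i\<le>n. coeff p i *s mpow M i x) + (\<Sum>i\<le>n. coeff q i *s mpow M i x)"
    by (simp add: sum.distrib vec.scale_left_distrib)
  also have "\<dots> = pev M p x + pev M q x"
    using pev_bound[of p n M x] pev_bound[of q n M x] unfolding n_def by auto
  finally show ?thesis .
qed

lemma pev_smult: "pev M (smult c p) x = c *s pev M p x"
proof -
  have "pev M (smult c p) x = (\<Sum>i\<le>degree p. coeff (smult c p) i *s mpow M i x)"
    by (rule pev_bound) (rule degree_smult_le)
  then show ?thesis by (simp add: pev_def vec.scale_sum_right)
qed

lemma M_sum: "M *v (\<Sum>i\<in>I. f i) = (\<Sum>i\<in>I. M *v f i)"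
  by (induction I rule: infinite_finite_induct) (auto simp: matrix_vector_right_distrib)

lemma pev_pCons0: "pev M (pCons 0 q) x = M *v pev M q x"
proof -
  have "degree (pCons 0 q) \<le> Suc (degree q)" by (simp add: degree_pCons_le)
  then have "pev M (pCons 0 q) x = (\<Sum>i\<le>Suc (degree q). coeff (pCons 0 q) i *s mpow M i x)"
    by (rule pev_bound)
  also have "\<dots> = (\<Sum>i\<le>degree q. coeff q i *s mpow M (Suc i) x)"
    by (subst sum.atMost_Suc_shift) simp
  also have "\<dots> = M *v pev M q x"
    by (simp add: pev_def M_sum vector_scalar_commute mpow_Suc)
  finally show ?thesis .
qed

lemma pev_const: "pev M [:a:] x = a *s x"
  by (simp add: pev_def)

lemma pev_lin: "pev M ([:-z,1:] * q) x = M *v pev M q x - z *s pev M q x"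
proof -
  have "[:-z,1:] * q = smult (-z) q + pCons 0 q" by simp
  then have "pev M ([:-z,1:] * q) x = (-z) *s pev M q x + M *v pev M q x"
    by (simp only: pev_add pev_smult pev_pCons0)
  then show ?thesis by (simp add: vec.scale_minus_left)
qed

lemma pev_in: "vec.subspace S \<Longrightarrow> (\<forall>y\<in>S. M *v y \<in> S) \<Longrightarrow> x \<in> S \<Longrightarrow> pev M p x \<in> S"
  unfolding pev_def
  by (intro vec.subspace_sum vec.subspace_scale mpow_in) auto


lemma pev_zero[simp]: "pev M 0 x = 0" by (simp add: pev_def)

lemma pev_sum: "finite I \<Longrightarrow> pev M (\<Sum>i\<in>I. f i) x = (\<Sum>i\<in>I. pev M (f i) x)"
  by (induction I rule: finite_induct) (auto simp: pev_add)

lemma pev_monom: "pev M (monom c i) x = c *s mpow M i x"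
proof -
  have "pev M (monom c i) x = (\<Sum>k\<le>i. coeff (monom c i) k *s mpow M k x)"
    by (rule pev_bound) (simp add: degree_monom_le)
  also have "\<dots> = (\<Sum>k\<le>i. if k = i then c *s mpow M i x else 0)"
    by (rule sum.cong) auto
  also have "\<dots> = c *s mpow M i x" by simp
  finally show ?thesis .
qed

lemma eig_poly:
  assumes S: "vec.subspace S" and inv: "\<forall>y\<in>S. M *v y \<in> S"
  shows "p \<noteq> 0 \<Longrightarrow> x \<in> S \<Longrightarrow> x \<noteq> 0 \<Longrightarrow> pev M p x = 0 \<Longrightarrow> \<exists>y\<in>S. y \<noteq> 0 \<and> (\<exists>z. M *v y = z *s y)"
proof (induction "degree p" arbitrary: p x rule: less_induct)
  case less
  show ?case
  proof (cases "degree p = 0")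
    case True
    then have "pev M p x = coeff p 0 *s x" by (simp add: pev_def)
    moreover have "coeff p 0 \<noteq> 0" using less.prems(1) True leading_coeff_0_iff[of p]
      by simp
    ultimately show ?thesis using less.prems by simp
  next
    case False
    have "coeff p (degree p) \<noteq> 0" using less.prems(1) by simp
    then have "\<exists>i\<in>{1..degree p}. coeff p i \<noteq> 0" using False by (intro bexI[of _ "degree p"]) auto
    then obtain z where "(\<Sum>i\<le>degree p. coeff p i * z^i) = 0"
      using fundamental_theorem_of_algebra[of "coeff p" "degree p"] by blast
    then have "poly p z = 0" by (simp add: poly_altdef)
    then have "[:-z,1:] dvd p" by (simp add: poly_eq_0_iff_dvd)
    then obtain q where pq: "p = [:-z,1:] * q" by (elim dvdE)
    have q0: "q \<noteq> 0" using pq less.prems(1) by auto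
    have "degree p = degree [:-z,1:] + degree q" unfolding pq by (rule degree_mult_eq) (use q0 in auto)
    then have dq: "degree q < degree p" by simp
    define y where "y = pev M q x"
    have yS: "y \<in> S" unfolding y_def using pev_in[OF S inv less.prems(2)] .
    show ?thesis
    proof (cases "y = 0")
      case True
      show ?thesis by (rule less.hyps[OF dq q0 less.prems(2,3)]) (use True in \<open>simp add: y_def\<close>)
    next
      case False
      have "M *v y - z *s y = 0" using less.prems(4) unfolding pq pev_lin y_def .
      then have "M *v y = z *s y" by simp
      then show ?thesis using False yS by blast
    qed
  qed
qed

lemma krylov:
  fixes M :: "complex^'n^'n"
  shows "\<exists>p. p \<noteq> 0 \<and> pev M p x = 0"
proof (cases "inj_on (\<lambda>j. mpow M j x) {..CARD('n)}")
  case False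
  then obtain i j where ij: "i \<noteq> j" "mpow M i x = mpow M j x"
    unfolding inj_on_def by blast
  define p where "p = monom (1::complex) i + smult (-1) (monom 1 j)"
  have "coeff p i = 1" using ij unfolding p_def by simp
  then have "p \<noteq> 0" by auto
  moreover have "pev M p x = 0" unfolding p_def pev_add pev_smult pev_monom using ij
    by (simp add: vec.scale_minus_left)
  ultimately show ?thesis by blast
next
  case True
  define K where "K = (\<lambda>j. mpow M j x) ` {..CARD('n)}"
  have fK: "finite K" unfolding K_def by simp
  have cK: "card K = Suc (CARD('n))" unfolding K_def using card_image[OF True] by simp
  have "vec.dim K \<le> vec.dim (UNIV :: (complex^'n) set)" by (rule vec.dim_subset) simp
  then have "vec.dim K \<le> CARD('n)" unfolding vec_dim_card .
  then have "vec.dependent K" using cK by (intro vec.dependent_biggerset_general) simp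
  then obtain u where u: "\<exists>v\<in>K. u v \<noteq> 0" "(\<Sum>v\<in>K. u v *s v) = 0"
    using vec.dependent_finite[OF fK] by blast
  define p where "p = (\<Sum>j\<le>CARD('n). monom (u (mpow M j x)) j)"
  have cp: "coeff p j = u (mpow M j x)" if "j \<le> CARD('n)" for j
  proof -
    have "coeff p j = (\<Sum>i\<le>CARD('n). if i = j then u (mpow M i x) else 0)"
      unfolding p_def coeff_sum coeff_monom by (rule sum.cong) auto
    also have "\<dots> = u (mpow M j x)" using that by simp
    finally show ?thesis .
  qed
  obtain v where "v \<in> K" "u v \<noteq> 0" using u by blast
  then obtain j where "j \<le> CARD('n)" "u (mpow M j x) \<noteq> 0" unfolding K_def by auto
  then have "coeff p j \<noteq> 0" using cp by simp
  then have "p \<noteq> 0" by auto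
  moreover have "pev M p x = (\<Sum>j\<le>CARD('n). u (mpow M j x) *s mpow M j x)"
    unfolding p_def by (simp add: pev_sum pev_monom)
  moreover have "\<dots> = (\<Sum>v\<in>K. u v *s v)"
    unfolding K_def by (rule sum.reindex[OF True, symmetric, unfolded comp_def])
  ultimately show ?thesis using u by auto
qed

lemma eigvec_exists:
  fixes M :: "complex^'n^'n"
  assumes S: "vec.subspace S" and inv: "\<forall>y\<in>S. M *v y \<in> S" and x: "x \<in> S" "x \<noteq> 0"
  shows "\<exists>y\<in>S. y \<noteq> 0 \<and> (\<exists>z. M *v y = z *s y)"
  using krylov[of M x] eig_poly[OF S inv _ x] by blast


definition orthonormal :: "(complex^'n) set \<Rightarrow> bool" where
  "orthonormal B \<longleftrightarrow> (\<forall>e\<in>B. \<forall>e'\<in>B. braket e e' = (if e = e' then 1 else 0))"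

lemma adj_adj: "adj_mat (adj_mat A) = A"
  unfolding adj_mat_def by (simp add: vec_eq_iff)

lemma braket_adj': "braket x (A *v y) = braket (adj_mat A *v x) y"
  using braket_adj[of "adj_mat A" x y] unfolding adj_adj by (rule sym)

lemma parseval:
  assumes "finite B" "orthonormal B"
  shows "(norm (\<Sum>e\<in>B. a e *s e))\<^sup>2 = (\<Sum>e\<in>B. (cmod (a e))\<^sup>2)"
proof -
  have "braket (\<Sum>e\<in>B. a e *s e) (\<Sum>e\<in>B. a e *s e) = (\<Sum>e\<in>B. \<Sum>e'\<in>B. a e * (cnj (a e') * braket e' e))"
    by (simp only: braket_sum_left braket_scale_left braket_sum_right braket_scale_right sum_distrib_left mult.assoc)
  also have "\<dots> = (\<Sum>e\<in>B. \<Sum>e'\<in>B. if e' = e then a e * cnj (a e) else 0)"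
    using assms(2) unfolding orthonormal_def by (intro sum.cong) auto
  also have "\<dots> = (\<Sum>e\<in>B. of_real ((cmod (a e))\<^sup>2))"
    using assms(1) by (simp add: complex_norm_square[symmetric] del: of_real_power)
  finally have "of_real ((norm (\<Sum>e\<in>B. a e *s e))\<^sup>2) = (of_real (\<Sum>e\<in>B. (cmod (a e))\<^sup>2) :: complex)"
    unfolding braket_self of_real_sum .
  then show ?thesis using of_real_eq_iff by blast
qed

lemma norm_scale_vec: "norm (c *s (x::complex^'n)) = cmod c * norm x"
proof -
  have "braket (c *s x) (c *s x) = of_real ((cmod c * norm x)\<^sup>2)"
    unfolding braket_scale_left braket_scale_right
    by (simp add: braket_self mult.assoc[symmetric] cnj_mult_self power_mult_distrib complex_norm_square[symmetric])
  then have "of_real ((norm (c *s x))\<^sup>2) = (of_real ((cmod c * norm x)\<^sup>2) :: complex)"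
    unfolding braket_self .
  then have "(norm (c *s x))\<^sup>2 = (cmod c * norm x)\<^sup>2" by (simp only: of_real_eq_iff)
  then show ?thesis using power2_eq_iff_nonneg[of "norm (c *s x)" "cmod c * norm x"] by simp
qed

lemma braket_one_norm: "braket e e = 1 \<Longrightarrow> norm e = 1"
proof -
  assume "braket e e = 1"
  then have "(norm e)\<^sup>2 = 1" unfolding braket_self by (simp only: of_real_eq_1_iff)
  then show "norm e = 1" using power2_eq_iff_nonneg[of "norm e" 1] by simp
qed

lemma spectral:
  fixes M :: "complex^'n^'n"
  assumes U: "lunit M"
  shows "vec.subspace S \<Longrightarrow> \<forall>y\<in>S. M *v y \<in> S \<Longrightarrow> \<exists>B. finite B \<and> B \<subseteq> S \<and> orthonormal B \<and>
      (\<forall>e\<in>B. \<exists>z. M *v e = z *s e) \<and> (\<forall>x\<in>S. x = (\<Sum>e\<in>B. braket e x *s e))"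
proof (induction "vec.dim S" arbitrary: S rule: less_induct)
  case less
  note S = less.prems(1) and inv = less.prems(2)
  show ?case
  proof (cases "\<exists>x\<in>S. x \<noteq> 0")
    case False
    then show ?thesis by (intro exI[of _ "{}"]) (auto simp: orthonormal_def)
  next
    case True
    then obtain x where "x \<in> S" "x \<noteq> 0" by blast
    then obtain y z where y: "y \<in> S" "y \<noteq> 0" "M *v y = z *s y"
      using eigvec_exists[OF S inv] by blast
    define e where "e = (complex_of_real (1 / norm y)) *s y"
    have eS: "e \<in> S" unfolding e_def using S y by (simp add: vec.subspace_scale)
    have ee: "braket e e = 1"
      unfolding e_def braket_scale_left braket_scale_right using y(2)
      by (simp add: braket_self[of y] power2_eq_square field_simps)
    have Me: "M *v e = z *s e" unfolding e_def using y(3)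
      by (simp add: vector_scalar_commute vec.scale_scale mult.commute)
    have ne: "norm e = 1" using ee by (rule braket_one_norm)
    have "norm (M *v e) = norm e" using lunit_norm[OF U] .
    then have z1: "cmod z = 1" using ne Me by (simp add: norm_scale_vec)
    have "(adj_mat M ** M) *v e = e" using U unfolding lunit_def by simp
    then have "adj_mat M *v (z *s e) = e" by (simp add: matrix_vector_mul_assoc[symmetric] Me)
    then have "z *s (adj_mat M *v e) = e" by (simp add: vector_scalar_commute)
    then have "cnj z *s (z *s (adj_mat M *v e)) = cnj z *s e" by simp
    moreover have "cnj z * z = 1" using z1 complex_norm_square[of z] by (simp add: mult.commute)
    ultimately have adjMe: "adj_mat M *v e = cnj z *s e" by (simp add: vec.scale_scale)
    define S' where "S' = {x\<in>S. braket e x = 0}"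
    have S'sub: "vec.subspace S'" unfolding S'_def vec.subspace_def
      using S unfolding vec.subspace_def
      by (auto simp: braket_add_right braket_scale_right)
    have inv': "\<forall>x\<in>S'. M *v x \<in> S'"
    proof
      fix x assume x: "x \<in> S'"
      have "braket e (M *v x) = braket (adj_mat M *v e) x" by (rule braket_adj')
      also have "\<dots> = 0" using x unfolding adjMe braket_scale_left S'_def by simp
      finally show "M *v x \<in> S'" using x inv unfolding S'_def by auto
    qed
    have "e \<notin> S'" using ee unfolding S'_def by simp
    moreover have "S' \<subseteq> S" unfolding S'_def by blast
    ultimately have "S' \<subset> S" using eS by blast
    then have "S' \<subset> S" .
    have h1: "vec.span S' = S'" using S'sub by (rule vec.span_eq_iff[THEN iffD2])
    have h2: "vec.span S = S" using S by (rule vec.span_eq_iff[THEN iffD2])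
    have "vec.span S' \<subset> vec.span S" unfolding h1 h2 by fact
    then have "vec.dim S' < vec.dim S" by (rule vec.dim_psubset)
    then obtain B' where B': "finite B'" "B' \<subseteq> S'" "orthonormal B'"
      "\<forall>e\<in>B'. \<exists>z. M *v e = z *s e" "\<forall>x\<in>S'. x = (\<Sum>e\<in>B'. braket e x *s e)"
      using less.hyps[OF _ S'sub inv'] by blast
    have eB': "e \<notin> B'" using B'(2) ee unfolding S'_def by auto
    have orth0: "braket e e' = 0" "braket e' e = 0" if "e' \<in> B'" for e'
      using that B'(2) unfolding S'_def using braket_cnj[of e e'] by auto
    show ?thesis
    proof (intro exI[of _ "insert e B'"] conjI)
      show "finite (insert e B')" using B' by simp
      show "insert e B' \<subseteq> S" using B' eS unfolding S'_def by auto
      show "orthonormal (insert e B')" using B'(3) orth0 ee eB' unfolding orthonormal_def by auto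
      show "\<forall>e\<in>insert e B'. \<exists>z. M *v e = z *s e" using B'(4) Me by auto
      show "\<forall>x\<in>S. x = (\<Sum>e\<in>insert e B'. braket e x *s e)"
      proof
        fix x assume xS: "x \<in> S"
        define x' where "x' = x - braket e x *s e"
        have "x' \<in> S'" unfolding S'_def x'_def using xS eS S ee
          by (auto simp: braket_diff_right braket_scale_right vec.subspace_diff vec.subspace_scale)
        then have "x' = (\<Sum>e'\<in>B'. braket e' x' *s e')" using B'(5) by blast
        also have "\<dots> = (\<Sum>e'\<in>B'. braket e' x *s e')"
          by (intro sum.cong) (auto simp: x'_def braket_diff_right braket_scale_right orth0)
        finally have "x = braket e x *s e + (\<Sum>e'\<in>B'. braket e' x *s e')"
          unfolding x'_def by (simp add: algebra_simps)
        then show "x = (\<Sum>e\<in>insert e B'. braket e x *s e)"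
          using B'(1) eB' by simp
      qed
    qed
  qed
qed


lemma orthonormal_card:
  fixes B :: "(complex^'n) set"
  assumes "finite B" "orthonormal B"
  shows "card B \<le> CARD('n)"
proof -
  have "vec.independent B"
    unfolding vec.independent_explicit
  proof (intro conjI allI impI ballI)
    show "finite B" by fact
    fix c v assume h: "(\<Sum>v\<in>B. c v *s v) = 0" and v: "v \<in> B"
    have "0 = braket v (\<Sum>w\<in>B. c w *s w)" using h by simp
    also have "\<dots> = (\<Sum>w\<in>B. if w = v then c v else 0)"
      unfolding braket_sum_right braket_scale_right
      using assms(2) v unfolding orthonormal_def by (intro sum.cong) auto
    also have "\<dots> = c v" using assms(1) v by simp
    finally show "c v = 0" by simp
  qed
  then have "card B \<le> vec.dim B" using vec.independent_bound_general by blast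
  also have "\<dots> \<le> vec.dim (UNIV :: (complex^'n) set)" by (rule vec.dim_subset) simp
  finally show ?thesis unfolding vec_dim_card .
qed

lemma mpow_sum: "mpow M k (\<Sum>i\<in>I. f i) = (\<Sum>i\<in>I. mpow M k (f i))"
  by (induction k) (auto simp: mpow_Suc M_sum)

lemma mpow_scale: "mpow M k (c *s v) = c *s mpow M k v"
  by (induction k) (auto simp: mpow_Suc vector_scalar_commute)

lemma mpow_eig: "M *v e = z *s e \<Longrightarrow> mpow M k e = (z ^ k) *s e"
  by (induction k) (auto simp: mpow_Suc vector_scalar_commute vec.scale_scale mult.commute)

lemma power_close:
  assumes fB: "finite B" and oB: "orthonormal B"
    and eig: "\<forall>e\<in>B. M *v e = lam e *s e"
    and dec: "\<forall>x. x = (\<Sum>e\<in>B. braket e x *s e)"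
    and cl: "\<forall>e\<in>B. cmod (lam e ^ k - 1) \<le> \<delta>" and d0: "0 \<le> \<delta>"
  shows "norm (mpow M k x - x) \<le> \<delta> * norm x"
proof -
  have dx: "x = (\<Sum>e\<in>B. braket e x *s e)" by (rule spec[OF dec])
  have "mpow M k x = mpow M k (\<Sum>e\<in>B. braket e x *s e)" using arg_cong[OF dx, of "mpow M k"] .
  also have "\<dots> = (\<Sum>e\<in>B. braket e x *s mpow M k e)" by (simp only: mpow_sum mpow_scale)
  also have "\<dots> = (\<Sum>e\<in>B. braket e x *s ((lam e ^ k) *s e))"
  proof (intro sum.cong refl)
    fix e assume e: "e \<in> B"
    have "mpow M k e = lam e ^ k *s e" by (rule mpow_eig) (use eig e in blast)
    then show "braket e x *s mpow M k e = braket e x *s ((lam e ^ k) *s e)" by simp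
  qed
  finally have h1: "mpow M k x = (\<Sum>e\<in>B. braket e x *s ((lam e ^ k) *s e))" .
  have "mpow M k x - x = (\<Sum>e\<in>B. braket e x *s ((lam e ^ k) *s e)) - x" using h1 by (rule arg_cong)
  also have "\<dots> = (\<Sum>e\<in>B. braket e x *s ((lam e ^ k) *s e)) - (\<Sum>e\<in>B. braket e x *s e)"
    using arg_cong[OF dx, of "\<lambda>t. (\<Sum>e\<in>B. braket e x *s ((lam e ^ k) *s e)) - t"] .
  also have "\<dots> = (\<Sum>e\<in>B. braket e x *s ((lam e ^ k) *s e) - braket e x *s e)"
    by (rule sum_subtractf[symmetric])
  also have "\<dots> = (\<Sum>e\<in>B. (braket e x * (lam e ^ k - 1)) *s e)"
    by (intro sum.cong refl) (simp add: vec.scale_scale right_diff_distrib vec.scale_left_diff_distrib)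
  finally have "mpow M k x - x = (\<Sum>e\<in>B. (braket e x * (lam e ^ k - 1)) *s e)" .
  then have "(norm (mpow M k x - x))\<^sup>2 = (\<Sum>e\<in>B. (cmod (braket e x * (lam e ^ k - 1)))\<^sup>2)"
    using parseval[OF fB oB] by simp
  also have "\<dots> \<le> (\<Sum>e\<in>B. \<delta>\<^sup>2 * (cmod (braket e x))\<^sup>2)"
  proof (intro sum_mono)
    fix e assume "e \<in> B"
    then have "cmod (lam e ^ k - 1) \<le> \<delta>" using cl by blast
    then have "(cmod (lam e ^ k - 1))\<^sup>2 \<le> \<delta>\<^sup>2" by (simp add: power_mono)
    then show "(cmod (braket e x * (lam e ^ k - 1)))\<^sup>2 \<le> \<delta>\<^sup>2 * (cmod (braket e x))\<^sup>2"
      by (simp add: norm_mult power_mult_distrib mult.commute[of "(cmod (braket e x))\<^sup>2"] mult_right_mono)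
  qed
  also have "\<dots> = \<delta>\<^sup>2 * (norm x)\<^sup>2"
  proof -
    have px: "(norm x)\<^sup>2 = (\<Sum>e\<in>B. (cmod (braket e x))\<^sup>2)"
      using parseval[OF fB oB, of "\<lambda>e. braket e x"] unfolding dx[symmetric] .
    show ?thesis unfolding px by (rule sum_distrib_left[symmetric])
  qed
  also have "\<dots> = (\<delta> * norm x)\<^sup>2" by (simp add: power_mult_distrib)
  finally show ?thesis by (rule power2_le_imp_le) (use d0 in simp)
qed

lemma cis_close: "cmod (cis t - 1) \<le> \<bar>t\<bar>"
proof -
  have "(cmod (cis t - 1))\<^sup>2 = (cos t - 1)\<^sup>2 + (sin t)\<^sup>2" by (simp add: cmod_power2)
  also have "\<dots> = 2 - 2 * cos t" using sin_cos_squared_add[of t] by (simp add: power2_eq_square algebra_simps)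
  also have "\<dots> = 4 * (sin (t/2))\<^sup>2" using cos_double_sin[of "t/2"] by simp
  also have "\<dots> \<le> 4 * (t/2)\<^sup>2"
    using abs_le_square_iff[THEN iffD1, OF abs_sin_x_le_abs_x[of "t/2"]] by simp
  also have "\<dots> = \<bar>t\<bar>\<^sup>2" by (simp add: power2_eq_square)
  finally show ?thesis by (rule power2_le_imp_le) simp
qed

lemma dirichlet_unit:
  fixes lam :: "'b \<Rightarrow> complex"
  assumes fB: "finite B" and u: "\<forall>e\<in>B. cmod (lam e) = 1" and N: "N > 0"
  shows "\<exists>k>0. k \<le> N ^ card B \<and> (\<forall>e\<in>B. cmod (lam e ^ k - 1) \<le> 2 * pi / N)"
proof -
  obtain f where f: "bij_betw f {0..<card B} B" using ex_bij_betw_nat_finite[OF fB] by blast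
  define \<theta> where "\<theta> i = Arg2pi (lam (f i)) / (2 * pi)" for i
  obtain q p where q: "0 < q" "q \<le> int (N ^ card B)"
    and qp: "\<And>i. i < card B \<Longrightarrow> \<bar>of_int q * \<theta> i - of_int (p i)\<bar> < 1 / N"
    using Dirichlet_approx_simult[OF N, where ?\<theta> = \<theta> and ?n = "card B"] by blast
  define k where "k = nat q"
  have kq: "int k = q" unfolding k_def using q(1) by simp
  have "int k \<le> int (N ^ card B)" using q(2) kq by simp
  then have k2: "k \<le> N ^ card B" by (simp only: of_nat_le_iff)
  have k: "k > 0" "k \<le> N ^ card B" using q(1) kq k2 by auto
  have "cmod (lam e ^ k - 1) \<le> 2 * pi / N" if e: "e \<in> B" for e
  proof -
    have "e \<in> f ` {0..<card B}" using f e unfolding bij_betw_def by simp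
    then obtain i where i0: "i \<in> {0..<card B}" "e = f i" by (rule imageE)
    then have i: "i < card B" "f i = e" by auto
    define \<alpha> where "\<alpha> = Arg2pi (lam e)"
    have le: "lam e = cis \<alpha>"
    proof -
      have "cmod (lam e) = 1" using u e by blast
      then have "exp (\<i> * of_real \<alpha>) = lam e" unfolding \<alpha>_def by (simp only: complex_norm_eq_1_exp)
      then show ?thesis by (simp add: cis_conv_exp)
    qed
    define t where "t = 2 * pi * (of_int q * \<theta> i - of_int (p i))"
    have "real k * \<alpha> = t + 2 * pi * of_int (p i)"
      unfolding t_def \<theta>_def k_def \<alpha>_def using q(1) i by (simp add: field_simps)
    then have "lam e ^ k = cis t * cis (2 * pi * of_int (p i))"
      unfolding le Complex.DeMoivre cis_mult by simp
    also have "cis (2 * pi * of_int (p i)) = 1" by (simp add: complex_eq_iff)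
    finally have "lam e ^ k - 1 = cis t - 1" by simp
    then have "cmod (lam e ^ k - 1) \<le> \<bar>t\<bar>" using cis_close by simp
    also have "\<bar>t\<bar> = 2 * pi * \<bar>of_int q * \<theta> i - of_int (p i)\<bar>" unfolding t_def
      by (simp add: abs_mult)
    also have "\<dots> \<le> 2 * pi * (1 / N)" using qp[OF i(1)] by (intro mult_left_mono) auto
    finally show ?thesis by simp
  qed
  then show ?thesis using k by blast
qed


lemma unitary_approx:
  fixes M :: "complex^'n^'n"
  assumes U: "lunit M" and d: "0 < \<delta>" "\<delta> \<le> 1"
  shows "\<exists>k>0. real k \<le> (10 / \<delta>) ^ CARD('n) \<and> (\<forall>x. norm (mpow M k x - x) \<le> \<delta> * norm x)"
proof -
  have invU: "\<forall>y\<in>UNIV. M *v y \<in> (UNIV :: (complex^'n) set)" by simp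
  obtain B where B: "finite B \<and> B \<subseteq> UNIV \<and> orthonormal B \<and> (\<forall>e\<in>B. \<exists>z. M *v e = z *s e) \<and>
      (\<forall>x\<in>UNIV. x = (\<Sum>e\<in>B. braket e x *s e))"
    using spectral[OF U vec.subspace_UNIV invU] by (rule exE)
  have fB: "finite B" using B by (rule conjunct1)
  have oB: "orthonormal B" using B[THEN conjunct2, THEN conjunct2] by (rule conjunct1)
  have eigB: "\<forall>e\<in>B. \<exists>z. M *v e = z *s e"
    using B[THEN conjunct2, THEN conjunct2, THEN conjunct2] by (rule conjunct1)
  have B5: "\<forall>x\<in>UNIV. x = (\<Sum>e\<in>B. braket e x *s e)"
    using B[THEN conjunct2, THEN conjunct2, THEN conjunct2] by (rule conjunct2)
  have dec: "\<forall>x. x = (\<Sum>e\<in>B. braket e x *s e)"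
    by (intro allI) (rule bspec[OF B5 UNIV_I])
  obtain lam where lam: "\<forall>e\<in>B. M *v e = lam e *s e" using bchoice[OF eigB] by blast
  have u: "\<forall>e\<in>B. cmod (lam e) = 1"
  proof
    fix e assume e: "e \<in> B"
    then have "braket e e = 1" using oB unfolding orthonormal_def by auto
    then have ne: "norm e = 1" by (rule braket_one_norm)
    have "norm (M *v e) = norm e" by (rule lunit_norm[OF U])
    then show "cmod (lam e) = 1" using lam e ne by (simp add: norm_scale_vec)
  qed
  define N where "N = nat (ceiling (2 * pi / \<delta>))"
  have "2 * pi / \<delta> > 0" using d by simp
  then have N0: "N > 0" unfolding N_def by simp
  have Nge: "2 * pi / \<delta> \<le> real N" unfolding N_def by linarith
  have Nle: "real N \<le> 2 * pi / \<delta> + 1" unfolding N_def using \<open>2 * pi / \<delta> > 0\<close> by linarith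
  have "1 \<le> 1 / \<delta>" using d by simp
  have "real N \<le> 10 / \<delta>"
  proof -
    have "2 * pi / \<delta> + 1 \<le> 2 * pi / \<delta> + 1 / \<delta>" using \<open>1 \<le> 1 / \<delta>\<close> by simp
    also have "\<dots> = (2 * pi + 1) / \<delta>" by (simp add: add_divide_distrib)
    also have "\<dots> \<le> 10 / \<delta>" using d pi_less_4 by (intro divide_right_mono) auto
    finally show ?thesis using Nle by simp
  qed
  obtain k where k: "k > 0" "k \<le> N ^ card B" and cl: "\<forall>e\<in>B. cmod (lam e ^ k - 1) \<le> 2 * pi / N"
    using dirichlet_unit[OF fB u N0] by blast
  have "2 * pi / real N \<le> \<delta>" using Nge d N0
  proof -
    have "2 * pi \<le> real N * \<delta>" using Nge pos_divide_le_eq[OF d(1)] by simp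
    then show ?thesis using pos_divide_le_eq[of "real N" "2 * pi" \<delta>] N0 by (simp add: mult.commute)
  qed
  then have cl': "\<forall>e\<in>B. cmod (lam e ^ k - 1) \<le> \<delta>" using cl by (meson order_trans)
  have "real k \<le> real (N ^ card B)" using k(2) by (simp only: of_nat_le_iff)
  then have "real k \<le> real N ^ card B" by simp
  also have "\<dots> \<le> real N ^ CARD('n)"
    using orthonormal_card[OF fB oB] N0 by (intro power_increasing) auto
  also have "\<dots> \<le> (10 / \<delta>) ^ CARD('n)" using \<open>real N \<le> 10 / \<delta>\<close> by (intro power_mono) auto
  finally have kb: "real k \<le> (10 / \<delta>) ^ CARD('n)" .
  show ?thesis using k(1) kb power_close[OF fB oB lam dec cl' less_imp_le[OF d(1)]] by blast
qed



lemma qrun_add: "qrun U s w (a + m) = qrun U (qrun U s w a) (\<lambda>i. w (a + i)) m"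
  by (induction m) auto

lemma qrun_cong: "(\<forall>i<m. w1 i = w2 i) \<Longrightarrow> qrun U s w1 m = qrun U s w2 m"
  by (induction m) auto

lemma conc_shift: "(\<lambda>i. conc_word u v (length u + i)) = v"
  unfolding conc_word_def by auto

lemma conc_app_shift: "(\<lambda>i. conc_word (u @ x) v (length u + i)) = conc_word x v"
  unfolding conc_word_def by (auto simp: nth_append)

fun wmat :: "('a \<Rightarrow> complex^'n^'n) \<Rightarrow> 'a list \<Rightarrow> complex^'n^'n" where
  "wmat U [] = mat 1"
| "wmat U (a # w) = wmat U w ** U a"

lemma qrun_wmat: "qrun U z (conc_word w v) (length w) = wmat U w *v z"
proof (induction w arbitrary: z)
  case Nil
  then show ?case by (simp add: matrix_vector_mul_lid)
next
  case (Cons a w)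
  have "qrun U z (conc_word (a # w) v) (length (a # w)) =
        qrun U (qrun U z (conc_word (a # w) v) 1) (\<lambda>i. conc_word (a # w) v (1 + i)) (length w)"
    using qrun_add[of U z "conc_word (a # w) v" 1 "length w"] by simp
  also have "(\<lambda>i. conc_word (a # w) v (1 + i)) = conc_word w v"
    using conc_app_shift[of "[a]" w v] by simp
  also have "qrun U z (conc_word (a # w) v) 1 = U a *v z" by (simp add: conc_word_def)
  finally show ?case using Cons by (simp add: matrix_vector_mul_assoc)
qed

lemma lunit_wmat: "(\<forall>a. lunit (U a)) \<Longrightarrow> lunit (wmat U w)"
  by (induction w) (auto simp: lunit_one lunit_mult)

lemma length_word_pow: "length (word_pow w k) = k * length w"
  unfolding word_pow_def by (induction k) auto

lemma word_pow_Suc: "word_pow w (Suc k) = w @ word_pow w k"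
  unfolding word_pow_def by simp

lemma qrun_pow: "qrun U z (conc_word (word_pow w k) v) (k * length w) = mpow (wmat U w) k z"
proof (induction k arbitrary: z)
  case 0
  then show ?case by simp
next
  case (Suc k)
  have "qrun U z (conc_word (word_pow w (Suc k)) v) (Suc k * length w) =
    qrun U (qrun U z (conc_word (w @ word_pow w k) v) (length w))
      (\<lambda>i. conc_word (w @ word_pow w k) v (length w + i)) (k * length w)"
    unfolding word_pow_Suc by (simp add: qrun_add[symmetric])
  also have "(\<lambda>i. conc_word (w @ word_pow w k) v (length w + i)) = conc_word (word_pow w k) v"
    by (rule conc_app_shift)
  also have "qrun U z (conc_word (w @ word_pow w k) v) (length w) = qrun U z (conc_word w v) (length w)"
    by (rule qrun_cong) (auto simp: conc_word_def nth_append)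
  also have "\<dots> = wmat U w *v z" by (rule qrun_wmat)
  finally show ?case using Suc by (simp add: mpow_def funpow_Suc_right del: funpow.simps)
qed

lemma qrun_norm: "(\<forall>a. lunit (U a)) \<Longrightarrow> norm (qrun U s w n) = norm s"
  by (induction n) (auto simp: lunit_norm)

lemma qrun_diff: "(\<forall>a. lunit (U a)) \<Longrightarrow> norm (qrun U x v m - qrun U y v m) = norm (x - y)"
  by (induction m) (auto simp: lunit_norm matrix_vector_mult_diff_distrib[symmetric])

lemma g_close:
  assumes "norm psi = 1" "norm x = 1" "norm y = 1"
  shows "(cmod (braket psi x))\<^sup>2 \<le> (cmod (braket psi y))\<^sup>2 + 2 * norm (x - y)"
proof -
  define A where "A = cmod (braket psi x)"
  define B where "B = cmod (braket psi y)"
  define d where "d = norm (x - y)"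
  have "braket psi x = braket psi y + braket psi (x - y)" by (simp add: braket_diff_right)
  then have "A \<le> B + cmod (braket psi (x - y))" unfolding A_def B_def by (metis norm_triangle_ineq)
  also have "cmod (braket psi (x - y)) \<le> d" using braket_Cauchy[of psi "x - y"] assms unfolding d_def by simp
  finally have AB: "A \<le> B + d" by simp
  have A1: "A \<le> 1" using braket_Cauchy[of psi x] assms unfolding A_def by simp
  have B1: "B \<le> 1" using braket_Cauchy[of psi y] assms unfolding B_def by simp
  have A0: "0 \<le> A" "0 \<le> B" unfolding A_def B_def by auto
  show ?thesis
  proof (cases "A \<le> B")
    case True
    then have "A\<^sup>2 \<le> B\<^sup>2" using A0 by (simp add: power_mono)
    then show ?thesis unfolding A_def[symmetric] B_def[symmetric] using norm_ge_zero[of "x - y"] by linarith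
  next
    case False
    have "A\<^sup>2 - B\<^sup>2 = (A - B) * (A + B)" by (simp add: power2_eq_square algebra_simps)
    also have "\<dots> \<le> d * 2" using AB A1 B1 A0 False by (intro mult_mono) auto
    finally show ?thesis unfolding A_def[symmetric] B_def[symmetric] d_def[symmetric] by linarith
  qed
qed

lemma g_bounds:
  assumes "norm psi = 1" "norm x = 1"
  shows "0 \<le> (cmod (braket psi x))\<^sup>2" "(cmod (braket psi x))\<^sup>2 \<le> 1"
  using braket_Cauchy[of psi x] assms by (auto simp: power_le_one)

lemma fND_le:
  fixes U :: "'a \<Rightarrow> complex^'n^'n" and s0 :: "complex^'n"
  assumes n1: "\<forall>n. norm (qrun U s0 w1 n) = 1" and n2: "\<forall>n. norm (qrun U s0 w2 n) = 1"
    and cl: "\<forall>m. norm (qrun U s0 w1 (a + m) - qrun U s0 w2 (b + m)) \<le> \<delta>"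
  shows "fND U s0 F w1 \<le> fND U s0 F w2 + 2 * \<delta>"
proof -
  define g where "g psi x = (cmod (braket psi x))\<^sup>2" for psi x :: "complex^'n"
  define T where "T w = insert 0 {Inf (range (\<lambda>i::nat. g psi (qrun U s0 w (r i)))) | psi r.
        psi \<in> F \<and> norm psi = 1 \<and> strict_mono r}" for w
  have fT: "fND U s0 F w = Sup (T w)" for w unfolding fND_def T_def g_def by simp
  have d0: "0 \<le> \<delta>" using cl[rule_format, of 0] norm_ge_zero order_trans by blast
  have Tle: "t \<le> 1" if "t \<in> T w2" for t
  proof -
    from that consider "t = 0" | psi r where "t = Inf (range (\<lambda>i::nat. g psi (qrun U s0 w2 (r i))))"
      "norm psi = 1" unfolding T_def by blast
    then show ?thesis
    proof cases
      case 2
      have "bdd_below (range (\<lambda>i::nat. g psi (qrun U s0 w2 (r i))))"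
        using g_bounds(1)[OF 2(2) n2[rule_format]] unfolding g_def bdd_below_def by blast
      then have "t \<le> g psi (qrun U s0 w2 (r 0))" unfolding 2(1) by (rule cINF_lower) simp
      also have "\<dots> \<le> 1" using g_bounds(2)[OF 2(2) n2[rule_format]] unfolding g_def by blast
      finally show ?thesis .
    qed simp
  qed
  have bdd: "bdd_above (T w2)" using Tle unfolding bdd_above_def by blast
  have Z0: "0 \<le> Sup (T w2)" using cSup_upper[OF _ bdd, of 0] unfolding T_def by simp
  have "Sup (T w1) \<le> Sup (T w2) + 2 * \<delta>"
  proof (rule cSup_least)
    show "T w1 \<noteq> {}" unfolding T_def by simp
    fix t assume "t \<in> T w1"
    then consider "t = 0" | psi r where "t = Inf (range (\<lambda>i::nat. g psi (qrun U s0 w1 (r i))))"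
      "psi \<in> F" "norm psi = 1" "strict_mono r" unfolding T_def by blast
    then show "t \<le> Sup (T w2) + 2 * \<delta>"
    proof cases
      case 1
      then show ?thesis using Z0 d0 by simp
    next
      case 2
      define r' where "r' i = r (i + a) - a + b" for i
      have ra: "a \<le> r (i + a)" for i using seq_suble[OF 2(4), of "i + a"] by simp
      have sm: "strict_mono r'"
        unfolding strict_mono_Suc_iff r'_def
      proof
        fix i
        have "r (i + a) < r (Suc i + a)" using 2(4) by (simp add: strict_mono_def)
        then show "r (i + a) - a + b < r (Suc i + a) - a + b" using ra[of i] by simp
      qed
      have bb: "bdd_below (range (\<lambda>i::nat. g psi (qrun U s0 w1 (r i))))"
        using g_bounds(1)[OF 2(3) n1[rule_format]] unfolding g_def bdd_below_def by blast
      have "t - 2 * \<delta> \<le> g psi (qrun U s0 w2 (r' i))" for i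
      proof -
        define m where "m = r (i + a) - a"
        have e1: "r (i + a) = a + m" unfolding m_def using ra[of i] by simp
        have e2: "r' i = b + m" unfolding m_def r'_def by simp
        have "t \<le> g psi (qrun U s0 w1 (r (i + a)))" unfolding 2(1) by (rule cINF_lower[OF bb]) simp
        also have "\<dots> \<le> g psi (qrun U s0 w2 (r' i)) + 2 * norm (qrun U s0 w1 (a + m) - qrun U s0 w2 (b + m))"
          unfolding g_def e1 e2 by (rule g_close[OF 2(3) n1[rule_format] n2[rule_format]])
        also have "\<dots> \<le> g psi (qrun U s0 w2 (r' i)) + 2 * \<delta>" using cl by simp
        finally show ?thesis by simp
      qed
      then have "t - 2 * \<delta> \<le> Inf (range (\<lambda>i::nat. g psi (qrun U s0 w2 (r' i))))"
        by (intro cINF_greatest) auto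
      also have "\<dots> \<le> Sup (T w2)"
        by (rule cSup_upper[OF _ bdd]) (use 2 sm in \<open>auto simp: T_def\<close>)
      finally show ?thesis by simp
    qed
  qed
  then show ?thesis unfolding fT .
qed



lemma main_bound:
  fixes s0 :: "complex^'n" and U :: "'a::finite \<Rightarrow> complex^'n^'n"
  assumes QA: "is_QA s0 U F" and e: "0 < \<epsilon>" "\<epsilon> \<le> 1"
  shows "\<exists>k>0. real k \<le> (20 / \<epsilon>) ^ CARD('n) \<and> (\<forall>u v.
    \<bar>fND U s0 F (conc_word u v) - fND U s0 F (conc_word (u @ word_pow w k) v)\<bar> \<le> \<epsilon>)"
proof -
  have UU: "\<forall>a. lunit (U a)" using QA unfolding is_QA_def unitary_mat_def lunit_def by blast
  have ns0: "norm s0 = 1" using QA unfolding is_QA_def by blast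
  define M where "M = wmat U w"
  have LM: "lunit M" unfolding M_def by (rule lunit_wmat[OF UU])
  have e2: "\<epsilon>/2 > 0" "\<epsilon>/2 \<le> 1" using e by auto
  obtain k where k: "k > 0" "real k \<le> (10 / (\<epsilon>/2)) ^ CARD('n)"
    and cl: "\<forall>x. norm (mpow M k x - x) \<le> \<epsilon>/2 * norm x"
    using unitary_approx[OF LM e2] by blast
  have eq: "10 / (\<epsilon>/2) = 20 / \<epsilon>" by simp
  show ?thesis
  proof (intro exI[of _ k] conjI allI)
    show "k > 0" by fact
    show "real k \<le> (20 / \<epsilon>) ^ CARD('n)" using k(2) unfolding eq .
    fix u :: "'a list" and v :: "nat \<Rightarrow> 'a"
    define L where "L = length u"
    define w1 where "w1 = conc_word u v"
    define w2 where "w2 = conc_word (u @ word_pow w k) v"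
    define x where "x = qrun U s0 w1 L"
    define K where "K = k * length w"
    have r1: "qrun U s0 w1 (L + m) = qrun U x v m" for m
      unfolding x_def w1_def L_def qrun_add conc_shift ..
    have r2: "qrun U s0 w2 ((L + K) + m) = qrun U (mpow M k x) v m" for m
    proof -
      have "qrun U s0 w2 (L + (K + m)) = qrun U (qrun U s0 w2 L) (\<lambda>i. w2 (L + i)) (K + m)"
        by (rule qrun_add)
      also have "qrun U s0 w2 L = x" unfolding x_def w2_def w1_def
        by (rule qrun_cong) (auto simp: conc_word_def nth_append L_def)
      also have "(\<lambda>i. w2 (L + i)) = conc_word (word_pow w k) v" unfolding w2_def L_def
        by (rule conc_app_shift)
      also have "qrun U x (conc_word (word_pow w k) v) (K + m) =
          qrun U (qrun U x (conc_word (word_pow w k) v) K) (\<lambda>i. conc_word (word_pow w k) v (K + i)) m"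
        by (rule qrun_add)
      also have "(\<lambda>i. conc_word (word_pow w k) v (K + i)) = v"
        using conc_shift[of "word_pow w k" v] unfolding K_def length_word_pow .
      also have "qrun U x (conc_word (word_pow w k) v) K = mpow M k x" unfolding K_def M_def
        by (rule qrun_pow)
      finally show ?thesis by (simp only: add.assoc)
    qed
    have n1: "\<forall>n. norm (qrun U s0 w1 n) = 1" using qrun_norm[OF UU] ns0 by simp
    have n2: "\<forall>n. norm (qrun U s0 w2 n) = 1" using qrun_norm[OF UU] ns0 by simp
    have nx: "norm x = 1" unfolding x_def using n1 by simp
    have dd: "norm (qrun U x v m - qrun U (mpow M k x) v m) \<le> \<epsilon>/2" for m
    proof -
      have "norm (qrun U x v m - qrun U (mpow M k x) v m) = norm (x - mpow M k x)"
        by (rule qrun_diff[OF UU])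
      also have "\<dots> = norm (mpow M k x - x)" by (rule norm_minus_commute)
      also have "\<dots> \<le> \<epsilon>/2 * norm x" using cl by blast
      finally show ?thesis using nx by simp
    qed
    have c1: "\<forall>m. norm (qrun U s0 w1 (L + m) - qrun U s0 w2 ((L + K) + m)) \<le> \<epsilon>/2"
      unfolding r1 r2 using dd by blast
    have c2: "\<forall>m. norm (qrun U s0 w2 ((L + K) + m) - qrun U s0 w1 (L + m)) \<le> \<epsilon>/2"
      unfolding r1 r2 using dd by (simp add: norm_minus_commute)
    have i1: "fND U s0 F w1 \<le> fND U s0 F w2 + 2 * (\<epsilon>/2)" by (rule fND_le[OF n1 n2 c1])
    have i2: "fND U s0 F w2 \<le> fND U s0 F w1 + 2 * (\<epsilon>/2)" by (rule fND_le[OF n2 n1 c2])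
    have "\<bar>fND U s0 F w1 - fND U s0 F w2\<bar> \<le> \<epsilon>" using i1 i2 by linarith
    then show "\<bar>fND U s0 F (conc_word u v) - fND U s0 F (conc_word (u @ word_pow w k) v)\<bar> \<le> \<epsilon>"
      unfolding w1_def w2_def .
  qed
qed

lemma powr_bound:
  assumes "0 < \<epsilon>"
  shows "(1/20 * \<epsilon>) powr (- real n) = (20 / \<epsilon>) ^ n"
proof -
  have "(1/20 * \<epsilon>) powr (- real n) = inverse ((1/20 * \<epsilon>) powr real n)" by (rule powr_minus)
  also have "(1/20 * \<epsilon>) powr real n = (1/20 * \<epsilon>) ^ n" using assms by (intro powr_realpow) simp
  also have "inverse ((1/20 * \<epsilon>) ^ n) = (inverse (1/20 * \<epsilon>)) ^ n" by (rule power_inverse[symmetric])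
  also have "inverse (1/20 * \<epsilon>) = 20 / \<epsilon>" by (simp add: field_simps)
  finally show ?thesis .
qed

theorem theorem1:
  fixes s0 :: "complex^'n" and U :: "'a::finite \<Rightarrow> complex^'n^'n" and F :: "(complex^'n) set"
  assumes "is_QA s0 U F"
  shows "(\<forall>(w::'a list) (\<epsilon>::real). w \<noteq> [] \<longrightarrow> \<epsilon> > 0 \<longrightarrow>
            (\<exists>k::nat. k > 0 \<and> (\<forall>u (v::nat \<Rightarrow> 'a).
               \<bar>fND U s0 F (conc_word u v) - fND U s0 F (conc_word (u @ word_pow w k) v)\<bar> \<le> \<epsilon>)))
       \<and> (\<exists>c::real. c > 0 \<and>
            (\<forall>(s0'::complex^'n) (U'::'a \<Rightarrow> complex^'n^'n) F'. is_QA s0' U' F' \<longrightarrow>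
              (\<forall>(w::'a list) (\<epsilon>::real). w \<noteq> [] \<longrightarrow> 0 < \<epsilon> \<longrightarrow> \<epsilon> \<le> 1 \<longrightarrow>
                (\<exists>k::nat. k > 0 \<and> real k \<le> (c * \<epsilon>) powr (- real CARD('n)) \<and>
                  (\<forall>u (v::nat \<Rightarrow> 'a).
                    \<bar>fND U' s0' F' (conc_word u v) - fND U' s0' F' (conc_word (u @ word_pow w k) v)\<bar> \<le> \<epsilon>)))))"
proof (intro conjI allI impI)
  fix w :: "'a list" and \<epsilon> :: real
  assume "w \<noteq> []" "\<epsilon> > 0"
  define \<epsilon>' where "\<epsilon>' = min \<epsilon> 1"
  have "0 < \<epsilon>'" "\<epsilon>' \<le> 1" "\<epsilon>' \<le> \<epsilon>" unfolding \<epsilon>'_def using \<open>\<epsilon> > 0\<close> by auto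
  then obtain k where k: "k > 0" and h: "\<forall>u v.
    \<bar>fND U s0 F (conc_word u v) - fND U s0 F (conc_word (u @ word_pow w k) v)\<bar> \<le> \<epsilon>'"
    using main_bound[OF assms, of \<epsilon>' w] by blast
  show "\<exists>k::nat. k > 0 \<and> (\<forall>u (v::nat \<Rightarrow> 'a).
               \<bar>fND U s0 F (conc_word u v) - fND U s0 F (conc_word (u @ word_pow w k) v)\<bar> \<le> \<epsilon>)"
    using k h \<open>\<epsilon>' \<le> \<epsilon>\<close> by (meson order_trans)
next
  show "\<exists>c::real. c > 0 \<and>
            (\<forall>(s0'::complex^'n) (U'::'a \<Rightarrow> complex^'n^'n) F'. is_QA s0' U' F' \<longrightarrow>
              (\<forall>(w::'a list) (\<epsilon>::real). w \<noteq> [] \<longrightarrow> 0 < \<epsilon> \<longrightarrow> \<epsilon> \<le> 1 \<longrightarrow>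
                (\<exists>k::nat. k > 0 \<and> real k \<le> (c * \<epsilon>) powr (- real CARD('n)) \<and>
                  (\<forall>u (v::nat \<Rightarrow> 'a).
                    \<bar>fND U' s0' F' (conc_word u v) - fND U' s0' F' (conc_word (u @ word_pow w k) v)\<bar> \<le> \<epsilon>))))"
  proof (intro exI[of _ "1/20"] conjI allI impI)
    show "(0::real) < 1/20" by simp
    fix s0' :: "complex^'n" and U' :: "'a \<Rightarrow> complex^'n^'n" and F' and w :: "'a list" and \<epsilon> :: real
    assume QA: "is_QA s0' U' F'" and "w \<noteq> []" and e: "0 < \<epsilon>" "\<epsilon> \<le> 1"
    obtain k where "k > 0" "real k \<le> (20 / \<epsilon>) ^ CARD('n)" and h: "\<forall>u v.
      \<bar>fND U' s0' F' (conc_word u v) - fND U' s0' F' (conc_word (u @ word_pow w k) v)\<bar> \<le> \<epsilon>"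
      using main_bound[OF QA e, of w] by blast
    then show "\<exists>k::nat. k > 0 \<and> real k \<le> (1/20 * \<epsilon>) powr (- real CARD('n)) \<and>
                  (\<forall>u (v::nat \<Rightarrow> 'a).
                    \<bar>fND U' s0' F' (conc_word u v) - fND U' s0' F' (conc_word (u @ word_pow w k) v)\<bar> \<le> \<epsilon>)"
      unfolding powr_bound[OF e(1)] by blast
  qed
qed


end
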